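(* Equip $\mathbb{R}^k$ with the Euclidean norm and $\mathbb{R}$ with the absolute value. Then the maps $(0,\infty)^k\to\mathbb{R}$, $\lambda\mapsto g(\|Y-X\hat\beta^\lambda\|_2^2)$ and $\lambda\mapsto\|Y-X\hat\beta^\lambda\|_2^2$ are well defined (independent of the choice of minimizer $\hat\beta^\lambda$) and continuous.
   Context: $Y\in\mathbb{R}^n$, $X\in\mathbb{R}^{n\times p}$. Link function $g:\mathbb{R}\to[0,\infty)$ with $g(0)=0$, $g$ continuous and strictly increasing on $[0,\infty)$, continuously differentiable on $(0,\infty)$ with strictly positive and non-increasing derivative, and such that $\alpha\mapsto g(\|\alpha\|_2^2)$ is strictly convex on $\mathbb{R}^n$. $M_1,\dots,M_k\in\mathbb{R}^{p\times p}$ with $\bigcap_{j}\mathrm{Ker}(M_j)=\{0\}$, $q_j\ge1$, $\|\cdot\|_{q_j}$ the $\ell_{q_j}$-norm on $\mathbb{R}^p$. For $\lambda\in(0,\infty)^k$, $\hat\beta^\lambda$ denotes any element of $\arg\min_{\beta\in\mathbb{R}^p}\{g(\|Y-X\beta\|_2^2)+\sum_{j=1}^k\lambda_j\|M_j\beta\|_{q_j}\}$. *)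

theory Defs
  imports "HOL-Analysis.Analysis"
begin

definition lq_norm :: "real \<Rightarrow> real ^ 'p \<Rightarrow> real" where
  "lq_norm q v = (\<Sum>i\<in>UNIV. \<bar>v $ i\<bar> powr q) powr (1 / q)"

definition strictly_convex_on :: "'a::real_vector set \<Rightarrow> ('a \<Rightarrow> real) \<Rightarrow> bool" where
  "strictly_convex_on S f \<longleftrightarrow> convex S \<and>
     (\<forall>x\<in>S. \<forall>y\<in>S. \<forall>t::real. x \<noteq> y \<and> 0 < t \<and> t < 1 \<longrightarrow>
        f ((1 - t) *\<^sub>R x + t *\<^sub>R y) < (1 - t) * f x + t * f y)"

definition pen_obj ::
  "(real \<Rightarrow> real) \<Rightarrow> real ^ 'n \<Rightarrow> real ^ 'p ^ 'n \<Rightarrow> ('k::finite \<Rightarrow> real ^ 'p ^ 'p)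
   \<Rightarrow> ('k \<Rightarrow> real) \<Rightarrow> real ^ 'k \<Rightarrow> real ^ 'p \<Rightarrow> real" where
  "pen_obj g Y X M q lam \<beta> =
     g ((norm (Y - X *v \<beta>))\<^sup>2) + (\<Sum>j\<in>UNIV. lam $ j * lq_norm (q j) (M j *v \<beta>))"

definition is_minimizer ::
  "(real \<Rightarrow> real) \<Rightarrow> real ^ 'n \<Rightarrow> real ^ 'p ^ 'n \<Rightarrow> ('k::finite \<Rightarrow> real ^ 'p ^ 'p)
   \<Rightarrow> ('k \<Rightarrow> real) \<Rightarrow> real ^ 'k \<Rightarrow> real ^ 'p \<Rightarrow> bool" where
  "is_minimizer g Y X M q lam \<beta> \<longleftrightarrow>
     (\<forall>\<gamma>. pen_obj g Y X M q lam \<beta> \<le> pen_obj g Y X M q lam \<gamma>)"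

end

theory Submission imports Defs begin


definition lqS :: "real \<Rightarrow> real ^ 'p \<Rightarrow> real" where
  "lqS q v = (\<Sum>i\<in>UNIV. \<bar>v $ i\<bar> powr q)"

lemma lqS_nonneg: "0 \<le> lqS q v"
  unfolding lqS_def by (simp add: sum_nonneg)

lemma lq_norm_S: "lq_norm q v = lqS q v powr (1/q)"
  unfolding lq_norm_def lqS_def by simp

lemma lq_nonneg: "0 \<le> lq_norm q v"
  by (simp add: lq_norm_S)

lemma lqS_eq: assumes "1 \<le> q" shows "lqS q v = lq_norm q v powr q"
  using assms lqS_nonneg[of q v] by (simp add: lq_norm_S powr_powr)

lemma lq_comp: assumes "1 \<le> q" shows "\<bar>v $ i\<bar> \<le> lq_norm q v"
proof -
  have "\<bar>v $ i\<bar> powr q \<le> lqS q v"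
    unfolding lqS_def by (rule member_le_sum) auto
  then have "(\<bar>v $ i\<bar> powr q) powr (1/q) \<le> lqS q v powr (1/q)"
    using assms by (intro powr_mono2) auto
  then show ?thesis using assms by (simp add: lq_norm_S powr_powr)
qed

lemma lq_zero: assumes "1 \<le> q" shows "lq_norm q 0 = 0"
  using assms by (simp add: lq_norm_def)

lemma lq_zero_iff: assumes "1 \<le> q" shows "lq_norm q v = 0 \<longleftrightarrow> v = 0"
proof
  assume "lq_norm q v = 0"
  then have "\<forall>i. v $ i = 0" using lq_comp[OF assms, of v] by (metis abs_le_zero_iff)
  then show "v = 0" by (simp add: vec_eq_iff)
qed (simp add: lq_zero assms)

lemma lqS_scale: assumes "1 \<le> q" shows "lqS q (c *\<^sub>R v) = \<bar>c\<bar> powr q * lqS q v"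
  unfolding lqS_def by (simp add: abs_mult powr_mult sum_distrib_left)

lemma lq_scale: assumes "1 \<le> q" shows "lq_norm q (c *\<^sub>R v) = \<bar>c\<bar> * lq_norm q v"
  using assms lqS_nonneg[of q v]
  by (simp add: lq_norm_S lqS_scale powr_mult powr_powr)

lemma pow_convex:
  fixes a b t q :: real
  assumes q: "1 \<le> q" and a: "0 \<le> a" and b: "0 \<le> b" and t: "0 \<le> t" "t \<le> 1"
  shows "((1-t)*a + t*b) powr q \<le> (1-t) * a powr q + t * b powr q"
proof -
  have tl: "s powr q \<le> s" if "0 \<le> s" "s \<le> 1" for s :: real
    using powr_mono'[of 1 q s] that q by simp
  show ?thesis
  proof (cases "a = 0")
    case True
    then show ?thesis using tl[of t] t b q
      by (simp add: powr_mult mult_right_mono)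
  next
    case a0: False
    show ?thesis
    proof (cases "b = 0")
      case True
      then show ?thesis using tl[of "1-t"] t a q
        by (simp add: powr_mult mult_right_mono)
    next
      case False
      then show ?thesis using convex_onD[OF powr_convex[OF q], of t a b] a0 a b t by simp
    qed
  qed
qed

lemma lqS_convex:
  assumes q: "1 \<le> q" and t: "0 \<le> t" "t \<le> 1"
  shows "lqS q ((1-t) *\<^sub>R u + t *\<^sub>R v) \<le> (1-t) * lqS q u + t * lqS q v"
proof -
  have "lqS q ((1-t) *\<^sub>R u + t *\<^sub>R v) \<le> (\<Sum>i\<in>UNIV. ((1-t) * \<bar>u$i\<bar> + t * \<bar>v$i\<bar>) powr q)"
    unfolding lqS_def
  proof (rule sum_mono)
    fix i
    have "\<bar>((1-t) *\<^sub>R u + t *\<^sub>R v) $ i\<bar> = \<bar>(1-t) * u$i + t * v$i\<bar>" by simp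
    also have "\<dots> \<le> \<bar>(1-t) * u$i\<bar> + \<bar>t * v$i\<bar>" by (rule abs_triangle_ineq)
    also have "\<dots> = (1-t) * \<bar>u$i\<bar> + t * \<bar>v$i\<bar>" using t by (simp add: abs_mult)
    finally have "\<bar>((1-t) *\<^sub>R u + t *\<^sub>R v) $ i\<bar> \<le> (1-t) * \<bar>u$i\<bar> + t * \<bar>v$i\<bar>" .
    then show "\<bar>((1-t) *\<^sub>R u + t *\<^sub>R v) $ i\<bar> powr q \<le> ((1-t) * \<bar>u$i\<bar> + t * \<bar>v$i\<bar>) powr q"
      using q by (intro powr_mono2) auto
  qed
  also have "\<dots> \<le> (\<Sum>i\<in>UNIV. (1-t) * \<bar>u$i\<bar> powr q + t * \<bar>v$i\<bar> powr q)"
    by (rule sum_mono, rule pow_convex) (use q t in auto)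
  also have "\<dots> = (1-t) * lqS q u + t * lqS q v"
    unfolding lqS_def by (simp add: sum.distrib sum_distrib_left)
  finally show ?thesis .
qed

lemma lq_triangle:
  assumes q: "1 \<le> q"
  shows "lq_norm q (u + v) \<le> lq_norm q u + lq_norm q v"
proof (cases "u = 0 \<or> v = 0")
  case True then show ?thesis by (auto simp: lq_nonneg)
next
  case False
  define a where "a = lq_norm q u"
  define b where "b = lq_norm q v"
  have a: "0 < a" using False lq_zero_iff[OF q, of u] lq_nonneg[of q u] a_def by auto
  have b: "0 < b" using False lq_zero_iff[OF q, of v] lq_nonneg[of q v] b_def by auto
  define t where "t = b / (a + b)"
  have t: "0 \<le> t" "t \<le> 1" using a b by (auto simp: t_def)
  have e: "(1 / (a+b)) *\<^sub>R (u + v) = (1-t) *\<^sub>R ((1/a) *\<^sub>R u) + t *\<^sub>R ((1/b) *\<^sub>R v)"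
    using a b by (simp add: t_def field_simps scaleR_add_right)
  have Su: "lqS q ((1/a) *\<^sub>R u) = 1"
    using a q by (simp add: lqS_scale lqS_eq[OF q, of u] a_def powr_divide)
  have Sv: "lqS q ((1/b) *\<^sub>R v) = 1"
    using b q by (simp add: lqS_scale lqS_eq[OF q, of v] b_def powr_divide)
  have "lqS q ((1 / (a+b)) *\<^sub>R (u + v)) \<le> 1"
    using lqS_convex[OF q t, of "(1/a) *\<^sub>R u" "(1/b) *\<^sub>R v"] unfolding e Su Sv by simp
  then have "lqS q ((1 / (a+b)) *\<^sub>R (u + v)) powr (1/q) \<le> 1 powr (1/q)"
    using q lqS_nonneg by (intro powr_mono2) auto
  then have "lq_norm q ((1 / (a+b)) *\<^sub>R (u + v)) \<le> 1"
    by (simp add: lq_norm_S)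
  then have "(1/(a+b)) * lq_norm q (u + v) \<le> 1"
    using a b by (simp add: lq_scale[OF q])
  then show ?thesis using a b by (simp add: a_def b_def field_simps)
qed

lemma lq_cont: assumes "1 \<le> q" shows "continuous_on UNIV (lq_norm q)"
  unfolding lq_norm_def
  using assms
  by (intro continuous_on_powr' continuous_intros) (auto simp: sum_nonneg)

locale pl =
  fixes Y :: "real ^ 'n" and X :: "real ^ 'p ^ 'n" and M :: "'k::finite \<Rightarrow> real ^ 'p ^ 'p"
    and q :: "'k \<Rightarrow> real" and g :: "real \<Rightarrow> real"
  assumes g_nonneg: "\<forall>x. 0 \<le> g x" and g_cont: "continuous_on {0..} g"
    and g_sc: "strictly_convex_on UNIV (\<lambda>\<alpha>::real ^ 'n. g ((norm \<alpha>)\<^sup>2))"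
    and ker: "\<forall>\<beta>. (\<forall>j. M j *v \<beta> = 0) \<longrightarrow> \<beta> = 0"
    and q_ge1: "\<forall>j. 1 \<le> q j"
begin

definition h :: "real ^ 'p \<Rightarrow> real" where
  "h \<beta> = (\<Sum>j\<in>UNIV. lq_norm (q j) (M j *v \<beta>))"

lemma h_nonneg: "0 \<le> h \<beta>"
  unfolding h_def by (simp add: sum_nonneg lq_nonneg)

lemma h_scale: "h (c *\<^sub>R \<beta>) = \<bar>c\<bar> * h \<beta>"
  unfolding h_def using q_ge1 by (simp add: matrix_vector_mult_scaleR lq_scale sum_distrib_left)

lemma cont_Mj: "continuous_on UNIV (\<lambda>\<beta>. lq_norm (q j) (M j *v \<beta>))"
  by (rule continuous_on_compose2[OF lq_cont[OF q_ge1[rule_format]] _ subset_UNIV])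
     (intro linear_continuous_on matrix_vector_mul_bounded_linear)

lemma h_cont: "continuous_on UNIV h"
  unfolding h_def by (intro continuous_on_sum cont_Mj)

lemma h_pos: assumes "\<beta> \<noteq> 0" shows "0 < h \<beta>"
proof -
  obtain j where j: "M j *v \<beta> \<noteq> 0" using ker assms by blast
  have "0 < lq_norm (q j) (M j *v \<beta>)"
    using j lq_zero_iff[OF q_ge1[rule_format], of j] lq_nonneg by (metis order_le_less)
  also have "\<dots> \<le> h \<beta>" unfolding h_def
    by (rule member_le_sum) (auto simp: lq_nonneg)
  finally show ?thesis .
qed

lemma h_coercive: obtains c where "0 < c" "\<And>\<beta>. c * norm \<beta> \<le> h \<beta>"
proof -
  have "compact (sphere (0::real^'p) 1)" by simp
  moreover have "sphere (0::real^'p) 1 \<noteq> {}" by simp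
  moreover have "continuous_on (sphere 0 1) h" by (rule continuous_on_subset[OF h_cont]) simp
  ultimately have "\<exists>x\<in>sphere 0 1. \<forall>y\<in>sphere 0 1. h x \<le> h y" by (rule continuous_attains_inf)
  then obtain x0 where x0: "x0 \<in> sphere 0 1" "\<And>y. y \<in> sphere 0 1 \<Longrightarrow> h x0 \<le> h y"
    by blast
  have "x0 \<noteq> 0" using x0 by auto
  then have c: "0 < h x0" by (rule h_pos)
  have hb: "h x0 * norm \<beta> \<le> h \<beta>" for \<beta>
  proof (cases "\<beta> = 0")
    case True then show ?thesis by (simp add: h_nonneg)
  next
    case False
    define u where "u = (1 / norm \<beta>) *\<^sub>R \<beta>"
    have "u \<in> sphere 0 1" using False by (simp add: u_def)
    then have hu: "h x0 \<le> h u" by (rule x0)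
    have be: "\<beta> = norm \<beta> *\<^sub>R u" using False by (simp add: u_def)
    have "h (norm \<beta> *\<^sub>R u) = norm \<beta> * h u" by (simp add: h_scale)
    then have hbe: "h \<beta> = norm \<beta> * h u" using be by metis
    have "h x0 * norm \<beta> \<le> h u * norm \<beta>" 
      using hu by (rule mult_right_mono) simp
    then show ?thesis using hbe by (simp add: mult.commute)
  qed
  show ?thesis by (rule that[of "h x0", OF c hb])
qed

lemma obj_lower:
  assumes "\<And>j. m \<le> lam $ j" "0 \<le> m"
  shows "m * h \<beta> \<le> pen_obj g Y X M q lam \<beta>"
proof -
  have "m * h \<beta> = (\<Sum>j\<in>UNIV. m * lq_norm (q j) (M j *v \<beta>))"
    by (simp add: h_def sum_distrib_left)
  also have "\<dots> \<le> (\<Sum>j\<in>UNIV. lam $ j * lq_norm (q j) (M j *v \<beta>))"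
    by (rule sum_mono, rule mult_right_mono) (auto simp: assms lq_nonneg)
  also have "\<dots> \<le> pen_obj g Y X M q lam \<beta>"
    unfolding pen_obj_def using g_nonneg by simp
  finally show ?thesis .
qed

lemma obj_zero: "pen_obj g Y X M q lam 0 = g ((norm Y)\<^sup>2)"
  unfolding pen_obj_def using q_ge1 by (simp add: lq_zero)

lemma obj_tendsto:
  assumes "(l \<longlongrightarrow> l0) F" "(b \<longlongrightarrow> b0) F"
  shows "((\<lambda>x. pen_obj g Y X M q (l x) (b x)) \<longlongrightarrow> pen_obj g Y X M q l0 b0) F"
  unfolding pen_obj_def
proof (intro tendsto_add tendsto_sum tendsto_mult)
  have "((\<lambda>x. (norm (Y - X *v b x))\<^sup>2) \<longlongrightarrow> (norm (Y - X *v b0))\<^sup>2) F"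
    by (intro tendsto_intros bounded_linear.tendsto[OF matrix_vector_mul_bounded_linear] assms)
  then show "((\<lambda>x. g ((norm (Y - X *v b x))\<^sup>2)) \<longlongrightarrow> g ((norm (Y - X *v b0))\<^sup>2)) F"
    by (rule continuous_on_tendsto_compose[OF g_cont]) auto
  fix j
  show "((\<lambda>x. l x $ j) \<longlongrightarrow> l0 $ j) F" by (intro tendsto_intros assms)
  have "((\<lambda>x. M j *v b x) \<longlongrightarrow> M j *v b0) F"
    by (intro bounded_linear.tendsto[OF matrix_vector_mul_bounded_linear] assms)
  then show "((\<lambda>x. lq_norm (q j) (M j *v b x)) \<longlongrightarrow> lq_norm (q j) (M j *v b0)) F"
    by (rule continuous_on_tendsto_compose[OF lq_cont[OF q_ge1[rule_format]]]) auto
qed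

lemma obj_cont: "continuous_on S (pen_obj g Y X M q lam)"
  unfolding continuous_on_def
  by (intro ballI obj_tendsto tendsto_const tendsto_ident_at)

end



context pl begin

lemma bound:
  assumes c: "0 < c" "\<And>\<beta>. c * norm \<beta> \<le> h \<beta>"
    and m: "0 < m" "\<And>j. m \<le> lam $ j"
    and mini: "is_minimizer g Y X M q lam \<beta>"
  shows "norm \<beta> \<le> g ((norm Y)\<^sup>2) / (m * c)"
proof -
  have "m * (c * norm \<beta>) \<le> m * h \<beta>" using m c by (intro mult_left_mono) auto
  also have "\<dots> \<le> pen_obj g Y X M q lam \<beta>" using m by (intro obj_lower) auto
  also have "\<dots> \<le> pen_obj g Y X M q lam 0" using mini by (simp add: is_minimizer_def)
  also have "\<dots> = g ((norm Y)\<^sup>2)" by (rule obj_zero)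
  finally show ?thesis using m c by (simp add: field_simps)
qed

lemma exists_min:
  assumes pos: "\<forall>j. 0 < lam $ j"
  shows "\<exists>\<beta>. is_minimizer g Y X M q lam \<beta>"
proof -
  obtain c where c: "0 < c" "\<And>\<beta>. c * norm \<beta> \<le> h \<beta>" using h_coercive by blast
  define m where "m = Min (range (\<lambda>j. lam $ j))"
  have m: "0 < m" using pos by (simp add: m_def)
  have mle: "m \<le> lam $ j" for j unfolding m_def by (rule Min_le) auto
  define R where "R = g ((norm Y)\<^sup>2) / (m * c)"
  have R: "0 \<le> R" using g_nonneg m c by (simp add: R_def)
  obtain b where b: "b \<in> cball 0 R" "\<And>y. y \<in> cball 0 R \<Longrightarrow> pen_obj g Y X M q lam b \<le> pen_obj g Y X M q lam y"
    using continuous_attains_inf[of "cball (0::real^'p) R" "pen_obj g Y X M q lam"] R obj_cont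
    by auto
  have "pen_obj g Y X M q lam b \<le> pen_obj g Y X M q lam y" for y
  proof (cases "y \<in> cball 0 R")
    case True then show ?thesis by (rule b)
  next
    case False
    then have "R < norm y" by simp
    have "pen_obj g Y X M q lam b \<le> pen_obj g Y X M q lam 0" using b R by simp
    also have "\<dots> = m * c * R" using m c by (simp add: obj_zero R_def)
    also have "\<dots> \<le> m * (c * norm y)" using \<open>R < norm y\<close> m c by simp
    also have "\<dots> \<le> m * h y" using m c by (intro mult_left_mono) auto
    also have "\<dots> \<le> pen_obj g Y X M q lam y" using m mle by (intro obj_lower) auto
    finally show ?thesis .
  qed
  then show ?thesis unfolding is_minimizer_def by blast
qed

lemma unique_fit:
  assumes pos: "\<forall>j. 0 \<le> lam $ j"
    and m1: "is_minimizer g Y X M q lam b1" and m2: "is_minimizer g Y X M q lam b2"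
  shows "X *v b1 = X *v b2"
proof (rule ccontr)
  assume ne: "X *v b1 \<noteq> X *v b2"
  define x where "x = Y - X *v b1"
  define y where "y = Y - X *v b2"
  have xy: "x \<noteq> y" using ne by (simp add: x_def y_def)
  define bm where "bm = (1/2) *\<^sub>R b1 + (1/2) *\<^sub>R b2"
  have e: "Y - X *v bm = (1 - 1/2) *\<^sub>R x + (1/2) *\<^sub>R y"
    unfolding bm_def x_def y_def by (simp add: matrix_vector_right_distrib matrix_vector_mult_scaleR vec_eq_iff algebra_simps)
  have sc: "g ((norm (Y - X *v bm))\<^sup>2) < (1 - 1/2) * g ((norm x)\<^sup>2) + (1/2) * g ((norm y)\<^sup>2)"
  proof -
    have all: "\<forall>x\<in>UNIV. \<forall>y\<in>UNIV. \<forall>t::real. x \<noteq> y \<and> 0 < t \<and> t < 1 \<longrightarrow>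
        g ((norm ((1 - t) *\<^sub>R x + t *\<^sub>R y))\<^sup>2) < (1 - t) * g ((norm x)\<^sup>2) + t * g ((norm (y::real^'n))\<^sup>2)"
      using g_sc unfolding strictly_convex_on_def by blast
    have "g ((norm ((1 - 1/2) *\<^sub>R x + (1/2) *\<^sub>R y))\<^sup>2) < (1 - 1/2) * g ((norm x)\<^sup>2) + (1/2) * g ((norm y)\<^sup>2)"
      by (rule all[rule_format]) (use xy in auto)
    then show ?thesis unfolding e .
  qed
  have pj: "lq_norm (q j) (M j *v bm) \<le> (1/2) * lq_norm (q j) (M j *v b1) + (1/2) * lq_norm (q j) (M j *v b2)" for j
  proof -
    have "M j *v bm = (1/2) *\<^sub>R (M j *v b1) + (1/2) *\<^sub>R (M j *v b2)"
      by (simp add: bm_def matrix_vector_right_distrib matrix_vector_mult_scaleR)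
    then show ?thesis
      using lq_triangle[OF q_ge1[rule_format], of j "(1/2) *\<^sub>R (M j *v b1)" "(1/2) *\<^sub>R (M j *v b2)"]
      by (simp add: lq_scale[OF q_ge1[rule_format]])
  qed
  have "(\<Sum>j\<in>UNIV. lam $ j * lq_norm (q j) (M j *v bm)) \<le>
        (\<Sum>j\<in>UNIV. (1/2) * (lam $ j * lq_norm (q j) (M j *v b1)) + (1/2) * (lam $ j * lq_norm (q j) (M j *v b2)))"
  proof (rule sum_mono)
    fix j
    have "lam $ j * lq_norm (q j) (M j *v bm) \<le> lam $ j * ((1/2) * lq_norm (q j) (M j *v b1) + (1/2) * lq_norm (q j) (M j *v b2))"
      using pos pj by (intro mult_left_mono) auto
    then show "lam $ j * lq_norm (q j) (M j *v bm) \<le> (1/2) * (lam $ j * lq_norm (q j) (M j *v b1)) + (1/2) * (lam $ j * lq_norm (q j) (M j *v b2))"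
      by (simp add: algebra_simps)
  qed
  then have "pen_obj g Y X M q lam bm < (1/2) * pen_obj g Y X M q lam b1 + (1/2) * pen_obj g Y X M q lam b2"
    using sc unfolding pen_obj_def x_def y_def by (simp add: sum.distrib sum_distrib_left algebra_simps)
  moreover have "pen_obj g Y X M q lam b1 \<le> pen_obj g Y X M q lam b2"
    "pen_obj g Y X M q lam b2 \<le> pen_obj g Y X M q lam b1"
    "pen_obj g Y X M q lam b1 \<le> pen_obj g Y X M q lam bm"
    using m1 m2 by (auto simp: is_minimizer_def)
  ultimately show False by linarith
qed

end


context pl begin

lemma sel_min:
  assumes "\<forall>j. 0 < lam $ j"
  shows "is_minimizer g Y X M q lam (SOME \<beta>. is_minimizer g Y X M q lam \<beta>)"
  using someI_ex[OF exists_min[OF assms]] .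

lemma fit_cont:
  "continuous_on {lam. \<forall>j. 0 < lam $ j} (\<lambda>lam. X *v (SOME \<beta>. is_minimizer g Y X M q lam \<beta>))"
proof (rule continuous_on_sequentiallyI)
  define fit where "fit = (\<lambda>lam. X *v (SOME \<beta>. is_minimizer g Y X M q lam \<beta>))"
  fix u :: "nat \<Rightarrow> real ^ 'k" and a :: "real ^ 'k"
  assume uP: "\<forall>n. u n \<in> {lam. \<forall>j. 0 < lam $ j}" and aP: "a \<in> {lam. \<forall>j. 0 < lam $ j}"
    and lim: "u \<longlonglongrightarrow> a"
  obtain c where c: "0 < c" "\<And>\<beta>. c * norm \<beta> \<le> h \<beta>" using h_coercive by blast
  have "(\<lambda>n. fit (u n)) \<longlonglongrightarrow> fit a"
  proof (rule ccontr)
    assume "\<not> (\<lambda>n. fit (u n)) \<longlonglongrightarrow> fit a"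
    then obtain \<epsilon> where "\<epsilon> > 0" and inf: "infinite {n. \<not> dist (fit (u n)) (fit a) < \<epsilon>}"
      by (auto simp: tendsto_iff not_eventually INFM_iff_infinite cofinite_eq_sequentially[symmetric])
    define m0 where "m0 = Min (range (\<lambda>j. a $ j)) / 2"
    have m0: "0 < m0" using aP by (simp add: m0_def)
    have am: "2 * m0 \<le> a $ j" for j unfolding m0_def by (simp add: Min_le)
    obtain N where N: "\<And>n. n \<ge> N \<Longrightarrow> dist (u n) a < m0"
      using tendstoD[OF lim m0] unfolding eventually_sequentially by blast
    have "infinite ({n. \<not> dist (fit (u n)) (fit a) < \<epsilon>} - {..<N})"
      by (rule Diff_infinite_finite) (use inf in auto)
    then obtain r :: "nat \<Rightarrow> nat" where r: "strict_mono r"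
      "\<And>n. r n \<in> {n. \<not> dist (fit (u n)) (fit a) < \<epsilon>} - {..<N}"
      using infinite_enumerate by blast
    have ml: "m0 \<le> u (r n) $ j" for n j
    proof -
      have "r n \<ge> N" using r(2)[of n] by auto
      then have "dist (u (r n)) a < m0" by (rule N)
      moreover have "\<bar>(u (r n) - a) $ j\<bar> \<le> norm (u (r n) - a)" by (rule component_le_norm_cart)
      ultimately show ?thesis using am[of j] by (simp add: dist_norm)
    qed
    define bb where "bb n = (SOME \<beta>. is_minimizer g Y X M q (u (r n)) \<beta>)" for n
    have bbmin: "is_minimizer g Y X M q (u (r n)) (bb n)" for n
      unfolding bb_def using uP by (intro sel_min) auto
    define R where "R = g ((norm Y)\<^sup>2) / (m0 * c)"
    have bbR: "\<forall>n. bb n \<in> cball 0 R"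
      using bound[OF c m0 ml bbmin] by (simp add: R_def)
    obtain l s where ls: "l \<in> cball 0 R" "strict_mono (s :: nat \<Rightarrow> nat)" "(bb \<circ> s) \<longlonglongrightarrow> l"
      using seq_compactE[OF compact_imp_seq_compact[OF compact_cball] bbR] by blast
    have lim_l: "(\<lambda>n. u (r (s n))) \<longlonglongrightarrow> a"
      using LIMSEQ_subseq_LIMSEQ[OF lim strict_mono_o[OF r(1) ls(2)]] by (simp add: o_def)
    have lim_b: "(\<lambda>n. bb (s n)) \<longlonglongrightarrow> l" using ls(3) by (simp add: o_def)
    have minl: "is_minimizer g Y X M q a l"
      unfolding is_minimizer_def
    proof
      fix \<gamma>
      show "pen_obj g Y X M q a l \<le> pen_obj g Y X M q a \<gamma>"
        using bbmin by (intro LIMSEQ_le[OF obj_tendsto[OF lim_l lim_b] obj_tendsto[OF lim_l tendsto_const]])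
          (auto simp: is_minimizer_def)
    qed
    have fa: "fit a = X *v l"
      unfolding fit_def using aP by (intro unique_fit[OF _ sel_min minl]) (auto simp: less_imp_le)
    have "(\<lambda>n. X *v bb (s n)) \<longlonglongrightarrow> X *v l"
      by (intro bounded_linear.tendsto[OF matrix_vector_mul_bounded_linear] lim_b)
    then have "eventually (\<lambda>n. dist (X *v bb (s n)) (X *v l) < \<epsilon>) sequentially"
      using \<open>\<epsilon> > 0\<close> by (rule tendstoD)
    then obtain n0 where n0: "\<And>n. n \<ge> n0 \<Longrightarrow> dist (X *v bb (s n)) (X *v l) < \<epsilon>"
      unfolding eventually_sequentially by blast
    have d1: "dist (X *v bb (s n0)) (X *v l) < \<epsilon>" using n0 by simp
    have d2: "\<not> dist (fit (u (r (s n0)))) (fit a) < \<epsilon>" using r(2)[of "s n0"] by auto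
    have d3: "fit (u (r (s n0))) = X *v bb (s n0)" by (simp add: fit_def bb_def)
    from d1 d2 show False unfolding d3 fa by simp
  qed
  then show "(\<lambda>n. X *v (SOME \<beta>. is_minimizer g Y X M q (u n) \<beta>)) \<longlonglongrightarrow> X *v (SOME \<beta>. is_minimizer g Y X M q a \<beta>)"
    by (simp add: fit_def)
qed

end

lemma lemma3:
  fixes Y :: "real ^ 'n" and X :: "real ^ 'p ^ 'n"
    and M :: "'k::finite \<Rightarrow> real ^ 'p ^ 'p" and q :: "'k \<Rightarrow> real"
    and g g' :: "real \<Rightarrow> real"
  assumes g_nonneg: "\<forall>x. 0 \<le> g x"
    and g0: "g 0 = 0"
    and g_cont: "continuous_on {0..} g"
    and g_incr: "strict_mono_on {0..} g"
    and g_deriv: "\<forall>x>0. (g has_real_derivative g' x) (at x)"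
    and g'_cont: "continuous_on {0<..} g'"
    and g'_pos: "\<forall>x>0. 0 < g' x"
    and g'_nonincr: "\<forall>x y. 0 < x \<and> x \<le> y \<longrightarrow> g' y \<le> g' x"
    and g_strict_convex: "strictly_convex_on UNIV (\<lambda>\<alpha>::real ^ 'n. g ((norm \<alpha>)\<^sup>2))"
    and ker: "\<forall>\<beta>. (\<forall>j. M j *v \<beta> = 0) \<longrightarrow> \<beta> = 0"
    and q_ge1: "\<forall>j. 1 \<le> q j"
  shows "(\<forall>lam::real ^ 'k. (\<forall>j. 0 < lam $ j) \<longrightarrow> (\<exists>\<beta>. is_minimizer g Y X M q lam \<beta>)) \<and>
         (\<exists>F G :: real ^ 'k \<Rightarrow> real.
            (\<forall>lam. (\<forall>j. 0 < lam $ j) \<longrightarrow>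
               (\<forall>\<beta>. is_minimizer g Y X M q lam \<beta> \<longrightarrow>
                    G lam = g ((norm (Y - X *v \<beta>))\<^sup>2) \<and> F lam = (norm (Y - X *v \<beta>))\<^sup>2)) \<and>
            continuous_on {lam. \<forall>j. 0 < lam $ j} G \<and>
            continuous_on {lam. \<forall>j. 0 < lam $ j} F)"
proof -
  interpret pl Y X M q g
    by (unfold_locales) (use g_nonneg g_cont g_strict_convex ker q_ge1 in auto)
  define fit where "fit = (\<lambda>lam. X *v (SOME \<beta>. is_minimizer g Y X M q lam \<beta>))"
  define F where "F = (\<lambda>lam. (norm (Y - fit lam))\<^sup>2)"
  have fc: "continuous_on {lam. \<forall>j. 0 < lam $ j} fit" unfolding fit_def by (rule fit_cont)
  have Fc: "continuous_on {lam. \<forall>j. 0 < lam $ j} F"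
    unfolding F_def by (intro continuous_intros fc)
  have Gc: "continuous_on {lam. \<forall>j. 0 < lam $ j} (\<lambda>lam. g (F lam))"
    by (rule continuous_on_compose2[OF g_cont Fc]) (auto simp: F_def)
  have eq: "fit lam = X *v \<beta>" if "\<forall>j. 0 < lam $ j" "is_minimizer g Y X M q lam \<beta>" for lam \<beta>
    unfolding fit_def using that by (intro unique_fit[OF _ sel_min]) (auto simp: less_imp_le)
  have p1: "\<forall>lam::real ^ 'k. (\<forall>j. 0 < lam $ j) \<longrightarrow> (\<exists>\<beta>. is_minimizer g Y X M q lam \<beta>)"
    using exists_min by blast
  have p2: "\<forall>lam. (\<forall>j. 0 < lam $ j) \<longrightarrow>
               (\<forall>\<beta>. is_minimizer g Y X M q lam \<beta> \<longrightarrow>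
                    g (F lam) = g ((norm (Y - X *v \<beta>))\<^sup>2) \<and> F lam = (norm (Y - X *v \<beta>))\<^sup>2)"
    using eq by (simp add: F_def)
  show ?thesis
    apply (rule conjI[OF p1])
    apply (rule exI[of _ F])
    apply (rule exI[of _ "\<lambda>lam. g (F lam)"])
    using p2 Gc Fc by blast
qed

end
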